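(* For every $\alpha\in(0,1)$, the function $\delta\mapsto\psi_2\big(\alpha,L(\alpha;\delta);\delta\big)$ is strictly decreasing on $\delta\in(0,\infty)$.
   Context: For real $\alpha\ge0$, $\sigma^2\ge0$, $(\alpha,\sigma^2)\ne(0,0)$: $\psi_2(\alpha,\sigma^2;\delta)=\frac4\delta\big(\alpha^2+\sigma^2+1-\int_0^{\pi/2}\frac{2\alpha^2\sin^2\theta+\sigma^2}{(\alpha^2\sin^2\theta+\sigma^2)^{1/2}}d\theta\big)$. For $s\ge0$ let $\phi_1(s)=\int_0^{\pi/2}\frac{\sin^2\theta}{(\sin^2\theta+s^2)^{1/2}}d\theta$ (strictly decreasing from $1$ to $0$, inverse $\phi_1^{-1}:(0,1]\to[0,\infty)$) and $\phi_2(s)=\int_0^{\pi/2}\frac{2\sin^2\theta+s^2}{(\sin^2\theta+s^2)^{1/2}}d\theta$. For $\alpha\in(0,1)$, $\delta>0$: $L(\alpha;\delta)=\frac4\delta\Big(1-\frac{\phi_2^2(\phi_1^{-1}(\alpha))}{4[1+(\phi_1^{-1}(\alpha))^2]}\Big)$. *)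

theory Defs
  imports "HOL-Analysis.Analysis"
begin

text \<open>psi2 a s d stands for psi_2(alpha, sigma^2; delta) with a = alpha, s = sigma^2, d = delta.\<close>
definition psi2 :: "real \<Rightarrow> real \<Rightarrow> real \<Rightarrow> real" where
  "psi2 a s d = 4 / d * (a\<^sup>2 + s + 1 -
     integral {0..pi/2} (\<lambda>\<theta>. (2 * a\<^sup>2 * (sin \<theta>)\<^sup>2 + s) / sqrt (a\<^sup>2 * (sin \<theta>)\<^sup>2 + s)))"

definition phi1 :: "real \<Rightarrow> real" where
  "phi1 s = integral {0..pi/2} (\<lambda>\<theta>. (sin \<theta>)\<^sup>2 / sqrt ((sin \<theta>)\<^sup>2 + s\<^sup>2))"

definition phi2 :: "real \<Rightarrow> real" where
  "phi2 s = integral {0..pi/2} (\<lambda>\<theta>. (2 * (sin \<theta>)\<^sup>2 + s\<^sup>2) / sqrt ((sin \<theta>)\<^sup>2 + s\<^sup>2))"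

definition phi1_inv :: "real \<Rightarrow> real" where
  "phi1_inv a = (THE s. 0 \<le> s \<and> phi1 s = a)"

definition L :: "real \<Rightarrow> real \<Rightarrow> real" where
  "L a d = 4 / d * (1 - (phi2 (phi1_inv a))\<^sup>2 / (4 * (1 + (phi1_inv a)\<^sup>2)))"

end

theory Submission
  imports Defs
begin

lemma ftc_real:
  fixes G g :: "real \<Rightarrow> real"
  assumes "a \<le> b" "\<And>x. x \<in> {a..b} \<Longrightarrow> (G has_real_derivative g x) (at x)"
  shows "(g has_integral (G b - G a)) {a..b}"
  apply (rule fundamental_theorem_of_calculus[OF assms(1)])
  using assms(2) by (simp add: has_real_derivative_iff_has_vector_derivative has_vector_derivative_at_within)

lemma aux2:
  fixes s c k m :: real
  assumes "s > 0" "k > 0" "m > 0" "s\<^sup>2 + c\<^sup>2 = 1"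
  shows "- (inverse (1 + (c / (k * s))\<^sup>2) * (- (s * (k * s)) - c * (c * k)) /
           (k * (s * (k * (s * m))))) = k / ((c\<^sup>2 + k\<^sup>2 * s\<^sup>2) * m)"
proof -
  have e1: "inverse (1 + (c / (k * s))\<^sup>2) = (k * s)\<^sup>2 / ((k * s)\<^sup>2 + c\<^sup>2)"
    using assms by (simp add: field_simps power2_eq_square)
  have e2: "- (s * (k * s)) - c * (c * k) = - k"
  proof -
    have "- (s * (k * s)) - c * (c * k) = - k * (s\<^sup>2 + c\<^sup>2)" by (simp add: algebra_simps power2_eq_square)
    then show ?thesis using assms(4) by simp
  qed
  have pos: "(k * s)\<^sup>2 + c\<^sup>2 > 0" using assms by (simp add: add_pos_nonneg)
  have e3: "k * (s * (k * (s * m))) = (k * s)\<^sup>2 * m" by (simp add: power2_eq_square algebra_simps)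
  have nz: "(k * s)\<^sup>2 \<noteq> 0" using assms by simp
  have e4: "c\<^sup>2 + k\<^sup>2 * s\<^sup>2 = (k * s)\<^sup>2 + c\<^sup>2" by (simp add: power_mult_distrib)
  show ?thesis unfolding e1 e2 e3 e4 using nz pos assms(3) by (simp add: divide_simps)
qed

lemma int_rat:
  fixes p q :: real
  assumes p: "p > 0" and q: "q \<ge> 0"
  shows "((\<lambda>t. 1 / (p + q * (sin t)\<^sup>2)) has_integral pi / (2 * sqrt (p * (p + q)))) {0..pi/2}"
proof -
  define k where "k = sqrt (p+q) / sqrt p"
  define m where "m = sqrt p * sqrt (p+q)"
  have kpos: "k > 0" using p q by (simp add: k_def)
  have mpos: "m > 0" using p q by (simp add: m_def)
  have k2: "k\<^sup>2 = (p+q)/p" using p q by (simp add: k_def power_divide)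
  have mk: "m = p * k"
  proof -
    have "sqrt p * sqrt p = p" using p by simp
    moreover have "sqrt p > 0" using p by simp
    ultimately show ?thesis unfolding m_def k_def by (metis nonzero_mult_div_cancel_left times_divide_eq_right less_irrefl mult.commute)
  qed
  have key: "k / ((cos t)\<^sup>2 + k\<^sup>2 * (sin t)\<^sup>2) / m = 1 / (p + q * (sin t)\<^sup>2)" for t
  proof -
    have "(cos t)\<^sup>2 + k\<^sup>2 * (sin t)\<^sup>2 = (p + q * (sin t)\<^sup>2) / p"
      using p by (simp add: k2 field_simps cos_squared_eq)
    moreover have "p + q * (sin t)\<^sup>2 > 0" using p q by (simp add: add_pos_nonneg)
    moreover have "k * p + k * (q * (sin t)\<^sup>2) \<noteq> 0"
      using \<open>p + q * (sin t)\<^sup>2 > 0\<close> kpos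
      by (metis distrib_left less_irrefl mult_pos_pos)
    ultimately show ?thesis using p kpos by (simp add: mk field_simps)
  qed
  define G1 where "G1 t = arctan (k * tan t) / m" for t
  define G2 where "G2 t = - arctan (cos t / (k * sin t)) / m" for t
  have i1: "((\<lambda>t. 1 / (p + q * (sin t)\<^sup>2)) has_integral (G1 (pi/4) - G1 0)) {0..pi/4}"
  proof (rule ftc_real)
    fix x assume x: "x \<in> {0..pi/4}"
    then have cx: "cos x > 0" using pi_gt3 by (intro cos_gt_zero_pi) auto
    have "(G1 has_real_derivative (k * inverse ((cos x)\<^sup>2)) * inverse (1 + (k * tan x)\<^sup>2) / m) (at x)"
      unfolding G1_def using cx mpos
      by (auto intro!: derivative_eq_intros DERIV_arctan[THEN DERIV_chain2] simp: )
    moreover have "(k * inverse ((cos x)\<^sup>2)) * inverse (1 + (k * tan x)\<^sup>2) / m = k / ((cos x)\<^sup>2 + k\<^sup>2 * (sin x)\<^sup>2) / m"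
      using cx by (simp add: tan_def field_simps power2_eq_square)
    ultimately show "(G1 has_real_derivative 1 / (p + q * (sin x)\<^sup>2)) (at x)" by (metis key)
  qed (use pi_gt3 in auto)
  have i2: "((\<lambda>t. 1 / (p + q * (sin t)\<^sup>2)) has_integral (G2 (pi/2) - G2 (pi/4))) {pi/4..pi/2}"
  proof (rule ftc_real)
    fix x assume x: "x \<in> {pi/4..pi/2}"
    then have sx: "sin x > 0" using pi_gt3 by (intro sin_gt_zero) auto
    have "(G2 has_real_derivative k / ((cos x)\<^sup>2 + k\<^sup>2 * (sin x)\<^sup>2) / m) (at x)"
      unfolding G2_def using sx kpos mpos
      apply (intro derivative_eq_intros DERIV_arctan[THEN DERIV_chain2])
      apply (auto)
      using aux2[of "sin x" k m "cos x"] by simp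
    then show "(G2 has_real_derivative 1 / (p + q * (sin x)\<^sup>2)) (at x)" by (metis key)
  qed (use pi_gt3 in auto)
  have "((\<lambda>t. 1 / (p + q * (sin t)\<^sup>2)) has_integral (G1 (pi/4) - G1 0) + (G2 (pi/2) - G2 (pi/4))) {0..pi/2}"
    by (rule has_integral_combine[OF _ _ i1 i2]) (use pi_gt3 in auto)
  moreover have "(G1 (pi/4) - G1 0) + (G2 (pi/2) - G2 (pi/4)) = pi / (2 * sqrt (p * (p + q)))"
  proof -
    have "G1 (pi/4) - G1 0 = arctan k / m" by (simp add: G1_def tan_45)
    moreover have "G2 (pi/2) - G2 (pi/4) = arctan (1/k) / m"
      using kpos by (simp add: G2_def sin_45 cos_45)
    moreover have "arctan (1/k) = pi/2 - arctan k" using kpos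
      by (simp add: Transcendental.arctan_inverse)
    moreover have "m = sqrt (p * (p+q))" by (simp add: m_def real_sqrt_mult)
    moreover have "sqrt (p * p + p * q) > 0" using p q by (simp add: add_pos_nonneg)
    ultimately show ?thesis by (simp add: field_simps)
  qed
  ultimately show ?thesis by simp
qed

lemma pw2_poly:
  fixes x t d :: real
  assumes "x = t + d"
  shows "4*x\<^sup>2*(x\<^sup>2 - t\<^sup>2)*(4*x\<^sup>2-3*t\<^sup>2)\<^sup>2 - ((2*x\<^sup>2-t\<^sup>2)*(4*x\<^sup>2-3*t\<^sup>2) - t^3*x)\<^sup>2
     = 8*d*t^7 + 27*d^2*t^6 + 76*d^3*t^5 + 64*d^4*t^4 + 16*d^5*t^3"
  unfolding assms by algebra

lemma pw1_poly:
  fixes x t d :: real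
  assumes "x = t + d"
  shows "16*(x\<^sup>2 - t\<^sup>2)*x^6*(3*x\<^sup>2-2*t\<^sup>2)\<^sup>2 - ((3*x^4+(x\<^sup>2-t\<^sup>2)\<^sup>2)*(3*x\<^sup>2-2*t\<^sup>2) - 3*t^3*x^3)\<^sup>2
     = 32*d*t^11 + 151*d^2*t^10 + 468*d^3*t^9 + 1242*d^4*t^8 + 2328*d^5*t^7 + 2607*d^6*t^6
       + 1644*d^7*t^5 + 540*d^8*t^4 + 72*d^9*t^3"
  unfolding assms by algebra

lemma pw2:
  fixes y t :: real
  assumes y: "y \<ge> 0" and t: "t > 0"
  shows "(2*y\<^sup>2 + t\<^sup>2) / sqrt (y\<^sup>2 + t\<^sup>2) \<le> 2*y + t^3/(t\<^sup>2 + 4*y\<^sup>2)"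
proof -
  define x where "x = sqrt (y\<^sup>2 + t\<^sup>2)"
  have xpos: "x > 0" using t unfolding x_def by (simp add: add_nonneg_pos)
  have hx2: "x\<^sup>2 = y\<^sup>2 + t\<^sup>2" unfolding x_def by simp
  have xt: "t \<le> x" unfolding x_def using t by (metis real_sqrt_ge_abs1 add.commute abs_of_pos)
  define d where "d = x - t"
  have d: "d \<ge> 0" "x = t + d" using xt by (auto simp: d_def)
  define E where "E = t\<^sup>2 + 4*y\<^sup>2"
  have Epos: "E > 0" using t by (simp add: E_def add_pos_nonneg)
  have E': "E = 4*x\<^sup>2 - 3*t\<^sup>2" unfolding E_def hx2 by simp
  have y2: "y\<^sup>2 = x\<^sup>2 - t\<^sup>2" using hx2 by simp
  define L where "L = (2*y\<^sup>2+t\<^sup>2)*E - t^3*x"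
  define R where "R = 2*x*y*E"
  have R0: "R \<ge> 0" unfolding R_def using xpos y Epos by simp
  have "R\<^sup>2 - L\<^sup>2 = 4*x\<^sup>2*(x\<^sup>2 - t\<^sup>2)*(4*x\<^sup>2-3*t\<^sup>2)\<^sup>2 - ((2*x\<^sup>2-t\<^sup>2)*(4*x\<^sup>2-3*t\<^sup>2) - t^3*x)\<^sup>2"
  proof -
    have R2: "R\<^sup>2 = 4*x\<^sup>2*(x\<^sup>2 - t\<^sup>2)*(4*x\<^sup>2-3*t\<^sup>2)\<^sup>2"
    proof -
      have "R\<^sup>2 = 4*y\<^sup>2*x\<^sup>2*E\<^sup>2" unfolding R_def by (simp add: power_mult_distrib)
      then show ?thesis unfolding E' y2 by algebra
    qed
    have L': "L = (2*x\<^sup>2-t\<^sup>2)*(4*x\<^sup>2-3*t\<^sup>2) - t^3*x" unfolding L_def E' y2 by simp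
    show ?thesis by (simp only: R2 L')
  qed
  also have "\<dots> = 8*d*t^7 + 27*d^2*t^6 + 76*d^3*t^5 + 64*d^4*t^4 + 16*d^5*t^3"
    by (rule pw2_poly[OF d(2)])
  also have "\<dots> \<ge> 0" using d(1) t by simp
  finally have "L\<^sup>2 \<le> R\<^sup>2" by simp
  then have LR: "L \<le> R" using R0 by (rule power2_le_imp_le)
  have "2*y + t^3/(t\<^sup>2 + 4*y\<^sup>2) - (2*y\<^sup>2 + t\<^sup>2) / sqrt (y\<^sup>2 + t\<^sup>2) = (R - L) / (x * E)"
    unfolding R_def L_def x_def[symmetric] E_def[symmetric] using xpos Epos
    by (simp add: field_simps)
  also have "\<dots> \<ge> 0" using LR xpos Epos by simp
  finally show ?thesis by simp
qed

lemma pw1: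
  fixes y t :: real
  assumes y: "y \<ge> 0" and t: "t > 0"
  shows "(3*(y\<^sup>2 + t\<^sup>2)\<^sup>2 + (y\<^sup>2)\<^sup>2) / (2*(y\<^sup>2 + t\<^sup>2) * sqrt (y\<^sup>2 + t\<^sup>2)) \<le> 2*y + 3/2*t^3/(t\<^sup>2 + 3*y\<^sup>2)"
proof -
  define x where "x = sqrt (y\<^sup>2 + t\<^sup>2)"
  have xpos: "x > 0" using t unfolding x_def by (simp add: add_nonneg_pos)
  have hx2: "x\<^sup>2 = y\<^sup>2 + t\<^sup>2" unfolding x_def by simp
  have xt: "t \<le> x" unfolding x_def using t by (metis real_sqrt_ge_abs1 add.commute abs_of_pos)
  define d where "d = x - t"
  have d: "d \<ge> 0" "x = t + d" using xt by (auto simp: d_def)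
  define E where "E = t\<^sup>2 + 3*y\<^sup>2"
  have Epos: "E > 0" using t by (simp add: E_def add_pos_nonneg)
  have E': "E = 3*x\<^sup>2 - 2*t\<^sup>2" unfolding E_def hx2 by simp
  have y2: "y\<^sup>2 = x\<^sup>2 - t\<^sup>2" using hx2 by simp
  define L where "L = (3*(x\<^sup>2)\<^sup>2 + (y\<^sup>2)\<^sup>2)*E - 3*t^3*x^3"
  define R where "R = 4*y*x^3*E"
  have R0: "R \<ge> 0" unfolding R_def using xpos y Epos by simp
  have "R\<^sup>2 - L\<^sup>2 = 16*(x\<^sup>2 - t\<^sup>2)*x^6*(3*x\<^sup>2-2*t\<^sup>2)\<^sup>2 - ((3*x^4+(x\<^sup>2-t\<^sup>2)\<^sup>2)*(3*x\<^sup>2-2*t\<^sup>2) - 3*t^3*x^3)\<^sup>2"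
  proof -
    have R2: "R\<^sup>2 = 16*(x\<^sup>2 - t\<^sup>2)*x^6*(3*x\<^sup>2-2*t\<^sup>2)\<^sup>2"
    proof -
      have "R\<^sup>2 = 16*y\<^sup>2*(x^3)\<^sup>2*E\<^sup>2" unfolding R_def by (simp add: power_mult_distrib)
      then show ?thesis unfolding E' y2 by (simp add: power_mult_distrib flip: power_mult)
    qed
    have L': "L = (3*x^4+(x\<^sup>2-t\<^sup>2)\<^sup>2)*(3*x\<^sup>2-2*t\<^sup>2) - 3*t^3*x^3" unfolding L_def E' y2 by (simp flip: power_mult)
    show ?thesis by (simp only: R2 L')
  qed
  also have "\<dots> = 32*d*t^11 + 151*d^2*t^10 + 468*d^3*t^9 + 1242*d^4*t^8 + 2328*d^5*t^7 + 2607*d^6*t^6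
       + 1644*d^7*t^5 + 540*d^8*t^4 + 72*d^9*t^3"
    by (rule pw1_poly[OF d(2)])
  also have "\<dots> \<ge> 0" using d(1) t by simp
  finally have "L\<^sup>2 \<le> R\<^sup>2" by simp
  then have LR: "L \<le> R" using R0 by (rule power2_le_imp_le)
  have "2*y + 3/2*t^3/(t\<^sup>2 + 3*y\<^sup>2) - (3*(y\<^sup>2 + t\<^sup>2)\<^sup>2 + (y\<^sup>2)\<^sup>2) / (2*(y\<^sup>2 + t\<^sup>2) * sqrt (y\<^sup>2 + t\<^sup>2)) = (R - L) / (2 * x^3 * E)"
    unfolding R_def L_def x_def[symmetric] E_def[symmetric] hx2[symmetric] using xpos Epos
    by (simp add: field_simps power2_eq_square power3_eq_cube)
  also have "\<dots> \<ge> 0" using LR xpos Epos by simp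
  finally show ?thesis by simp
qed

lemma quartic_pos:
  fixes a :: real
  assumes "0 \<le> a" "a \<le> 7/10"
  shows "0 \<le> 13591296/1000000 - 88832/1000*a + 273664/1000*a^2 - 192*a^3 - 48*a^4"
proof -
  have a3: "a^3 \<le> h * a^2" and a4: "a^4 \<le> (h*h) * a^2" if "a \<le> h" for h
  proof -
    have "a^3 = a * a^2" by (simp add: power3_eq_cube power2_eq_square)
    also have "\<dots> \<le> h * a^2" using that assms by (intro mult_right_mono) auto
    finally show "a^3 \<le> h * a^2" .
    have "a^4 = a^2 * a^2" by (simp flip: power_add)
    also have "\<dots> \<le> h^2 * a^2" using that assms by (intro mult_right_mono power_mono) auto
    finally show "a^4 \<le> (h*h) * a^2" by (simp add: power2_eq_square)
  qed
  have sq: "0 \<le> (a - m)^2" for m by simp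
  have sqe: "(a - m)^2 = a^2 - 2*m*a + m*m" for m
    by (simp add: power2_eq_square algebra_simps)
  consider "a \<le> 35/100" | "35/100 \<le> a" "a \<le> 56/100" | "56/100 \<le> a" by linarith
  then show ?thesis
  proof cases
    case 1
    show ?thesis using a3[OF 1] a4[OF 1] sq[of "2/10"] sqe[of "2/10"] 1 assms by linarith
  next
    case 2
    show ?thesis using a3[OF 2(2)] a4[OF 2(2)] sq[of "29/100"] sqe[of "29/100"] 2 assms by linarith
  next
    case 3
    show ?thesis using a3[OF assms(2)] a4[OF assms(2)] sq[of "56/100"] sqe[of "56/100"] 3 assms by linarith
  qed
qed

lemma pi_lt: "pi < 31416/10000"
  using pi_approx(2) by simp

lemma Q1:
  fixes a s :: real
  assumes a: "0 < a" "a < 1" and s: "s > 0"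
  shows "2*a + 3*pi/4* s/sqrt (s + 3*a\<^sup>2) < 1 + a\<^sup>2 + 2* s"
proof -
  define b where "b = (1-a)\<^sup>2"
  have b: "b > 0" using a by (simp add: b_def)
  define w where "w = sqrt (s + 3*a\<^sup>2)"
  have w: "w > 0" using s by (simp add: w_def add_pos_nonneg)
  have w2: "w\<^sup>2 = s + 3*a\<^sup>2" using s unfolding w_def by (simp add: add_pos_nonneg less_imp_le)
  define K :: real where "K = 5552/1000"
  define c2 where "c2 = 4*b + 12*a\<^sup>2 - K"
  define c1 where "c1 = b\<^sup>2 + 12*a\<^sup>2*b"
  have hpi: "(3*pi/4)\<^sup>2 < K"
  proof -
    have "(3*pi/4)\<^sup>2 < (3*(31416/10000)/4)\<^sup>2"
      using pi_lt pi_gt_zero by (intro power_strict_mono) auto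
    then show ?thesis by (simp add: K_def power2_eq_square)
  qed
  have expand: "(b + 2* s)\<^sup>2 * (s + 3*a\<^sup>2) - K * s\<^sup>2 = 4* s^3 + c2* s\<^sup>2 + c1* s + 3*a\<^sup>2*b\<^sup>2"
    unfolding c1_def c2_def by algebra
  have c1: "c1 \<ge> 0" unfolding c1_def using b by simp
  have quad: "4* s\<^sup>2 + c2* s + c1 \<ge> 0"
  proof (cases "a \<ge> 7/10")
    case True
    have "a*a \<ge> (7/10)*a" using True a by (intro mult_right_mono) auto
    then have "16*a\<^sup>2 \<ge> 16*(7/10)*a" unfolding power2_eq_square by simp
    moreover have "c2 = 16*a\<^sup>2 - 8*a - 1552/1000" by (simp add: c2_def b_def K_def power2_eq_square algebra_simps)
    ultimately have "c2 \<ge> 0" using True by linarith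
    then show ?thesis using c1 s by simp
  next
    case False
    have p: "16*c1 - c2\<^sup>2 = 13591296/1000000 - 88832/1000*a + 273664/1000*a^2 - 192*a^3 - 48*a^4"
      unfolding c1_def c2_def b_def K_def by algebra
    have "16*c1 - c2\<^sup>2 \<ge> 0" unfolding p using False a by (intro quartic_pos) auto
    moreover have "4* s\<^sup>2 + c2* s + c1 = 4*(s + c2/8)\<^sup>2 + (16*c1 - c2\<^sup>2)/16"
      by (simp add: power2_eq_square field_simps)
    moreover have "0 \<le> 4*(s + c2/8)\<^sup>2" by simp
    ultimately show ?thesis by simp
  qed
  have "4* s^3 + c2* s\<^sup>2 + c1* s = s * (4* s\<^sup>2 + c2* s + c1)"
    by (simp add: power2_eq_square power3_eq_cube algebra_simps)
  also have "\<dots> \<ge> 0" using quad s by simp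
  finally have "(b + 2* s)\<^sup>2 * (s + 3*a\<^sup>2) - K * s\<^sup>2 > 0"
    unfolding expand using a b by (smt (verit) mult_pos_pos zero_less_power)
  moreover have "(3*pi/4* s)\<^sup>2 < K * s\<^sup>2"
  proof -
    have "(3*pi/4)\<^sup>2 * s\<^sup>2 < K * s\<^sup>2" using hpi s by (intro mult_strict_right_mono) auto
    then show ?thesis by (metis power_mult_distrib)
  qed
  ultimately have "(3*pi/4* s)\<^sup>2 < ((b + 2* s)*w)\<^sup>2"
    by (simp add: power_mult_distrib w2)
  then have "3*pi/4* s < (b + 2* s)*w"
    by (rule power_less_imp_less_base) (use b s w in simp)
  then have "3*pi/4* s/w < b + 2* s"
    using w by (simp add: divide_less_eq)
  then show ?thesis unfolding w_def[symmetric] b_def by (simp add: power2_eq_square algebra_simps)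
qed

lemma Q2:
  fixes u :: real
  assumes u: "u > 0"
  shows "2 + pi/2*u/sqrt (u + 4) < 2* sqrt (1 + u)"
proof -
  define r where "r = sqrt (1+u)"
  define w where "w = sqrt (u+4)"
  have r: "r > 0" "r\<^sup>2 = 1 + u" using u by (auto simp: r_def)
  have w: "w > 0" "w\<^sup>2 = u + 4" using u by (auto simp: w_def)
  have "(20*r)\<^sup>2 = 400*(1+u)" by (simp add: power_mult_distrib r(2))
  also have "\<dots> < (6*u + 44)\<^sup>2"
  proof -
    have "(6*u+44)\<^sup>2 = 36*u\<^sup>2 + 528*u + 1936" by (simp add: power2_eq_square algebra_simps)
    moreover have "u\<^sup>2 \<ge> 0" by simp
    ultimately show ?thesis using u by (smt (verit))
  qed
  finally have "(20*r)\<^sup>2 < (6*u + 44)\<^sup>2" .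
  then have A: "20*r < 6*u + 44"
    by (rule power_less_imp_less_base) (use u in simp)
  have "(31416/10000*(r+1))\<^sup>2 < (4*w)\<^sup>2"
  proof -
    have rr: "(r+1)\<^sup>2 = u + 2 + 2*r"
    proof -
      have "(r+1)\<^sup>2 = r\<^sup>2 + 2*r + 1" by (simp add: power2_eq_square algebra_simps)
      then show ?thesis using r(2) by simp
    qed
    have "(31416/10000*(r+1))\<^sup>2 = (31416/10000)\<^sup>2*(u + 2 + 2*r)"
      by (simp only: power_mult_distrib rr)
    also have "\<dots> < 16 * (u + 4)" using A u by (simp add: power2_eq_square)
    also have "\<dots> = (4*w)\<^sup>2" by (simp add: power_mult_distrib w(2))
    finally show ?thesis .
  qed
  then have "31416/10000*(r+1) < 4*w"
    by (rule power_less_imp_less_base) (use w in simp)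
  then have B: "pi*(r+1) < 4*w"
    using pi_lt r by (smt (verit) mult_right_mono)
  have rm1: "r - 1 = u/(r+1)"
    using r by (simp add: field_simps power2_eq_square)
  have nz: "w * 2 + r * (w * 2) \<noteq> 0" using r w by (smt (verit) mult_pos_pos)
  have "pi/2*u/w = (pi*(r+1)) * u / (2*w*(r+1))" using r w nz by (simp add: field_simps)
  also have "\<dots> < (4*w) * u / (2*w*(r+1))"
    using B u r w by (intro divide_strict_right_mono mult_strict_right_mono) auto
  also have "\<dots> = 2*(u/(r+1))" using w r nz by (simp add: field_simps)
  finally show ?thesis unfolding r_def[symmetric] w_def[symmetric] rm1[symmetric] by simp
qed

lemma int_sin: "(sin has_integral 1) {0..pi/2}"
proof -
  have "(sin has_integral ((\<lambda>t. - cos t) (pi/2) - (\<lambda>t. - cos t) 0)) {0..pi/2}"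
    by (rule ftc_real) (auto intro!: derivative_eq_intros)
  then show ?thesis by simp
qed

lemma int_sin2: "((\<lambda>t. (sin t)\<^sup>2) has_integral pi/4) {0..pi/2}"
proof -
  have "((\<lambda>t. (sin t)\<^sup>2) has_integral ((\<lambda>t. (t - sin t * cos t)/2) (pi/2) - (\<lambda>t. (t - sin t * cos t)/2) 0)) {0..pi/2}"
  proof (rule ftc_real)
    fix x :: real
    show "((\<lambda>t. (t - sin t * cos t)/2) has_real_derivative (sin x)\<^sup>2) (at x)"
      apply (auto intro!: derivative_eq_intros)
      using sin_cos_squared_add3[of x] power2_eq_square[of "sin x"] by (smt (verit))
  qed simp
  then show ?thesis by simp
qed

lemma deriv_phi:
  fixes A s :: real
  assumes A: "A \<ge> 0" and s: "s > 0"
  shows "((\<lambda>s. s * ((2*A + s) / sqrt (A + s))) has_real_derivative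
           (3*(A+s)\<^sup>2 + A\<^sup>2) / (2*(A+s) * sqrt (A+s))) (at s)"
proof -
  have As: "A + s > 0" using A s by simp
  define x where "x = sqrt (A + s)"
  have x: "x > 0" "x\<^sup>2 = A + s" using As by (auto simp: x_def)
  have xx: "\<And>c. x*(x*c) = c*(A+s)" using x(2) unfolding power2_eq_square by (metis mult.assoc mult.commute)
  show ?thesis
    using As apply (auto intro!: derivative_eq_intros)
    unfolding x_def[symmetric] using x apply (simp add: field_simps power2_eq_square)
    apply (rule disjI2)
    apply (simp only: xx)
    apply (simp add: algebra_simps power2_eq_square)
    done
qed

lemma sin_nonneg_half: "x \<in> {0..pi/2} \<Longrightarrow> sin x \<ge> 0"
  using pi_gt3 by (intro sin_ge_zero) auto

definition fxx :: "real \<Rightarrow> real \<Rightarrow> real \<Rightarrow> real" where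
  "fxx a s t = (3*(a\<^sup>2*(sin t)\<^sup>2 + s)\<^sup>2 + (a\<^sup>2*(sin t)\<^sup>2)\<^sup>2) / (2*(a\<^sup>2*(sin t)\<^sup>2 + s) * sqrt (a\<^sup>2*(sin t)\<^sup>2 + s))"

lemma fxx_cont: "s > 0 \<Longrightarrow> continuous_on {0..pi/2} (fxx a s)"
proof -
  assume s: "s > 0"
  have nn: "\<And>t. 0 \<le> a\<^sup>2 * (sin t)\<^sup>2" by simp
  show ?thesis unfolding fxx_def using s
    by (intro continuous_intros) (auto; smt (verit) nn)
qed

lemma J_bound:
  fixes a s :: real
  assumes a: "0 < a" "a < 1" and s: "s > 0"
  shows "integral {0..pi/2} (fxx a s) < 1 + a\<^sup>2 + 2 * s"
proof -
  define t where "t = sqrt s"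
  have t: "t > 0" "t\<^sup>2 = s" using s by (auto simp: t_def)
  define g where "g \<theta> = 2* a* sin \<theta> + 3/2* t^3 * (1/(s + 3* a\<^sup>2*(sin \<theta>)\<^sup>2))" for \<theta>
  have gi: "(g has_integral 2* a*1 + 3/2* t^3 * (pi / (2 * sqrt (s * (s + 3* a\<^sup>2))))) {0..pi/2}"
    unfolding g_def
    by (intro has_integral_add has_integral_mult_right int_sin int_rat) (use s in auto)
  have fi: "(fxx a s has_integral integral {0..pi/2} (fxx a s)) {0..pi/2}"
    using fxx_cont[OF s] by (intro integrable_integral integrable_continuous_interval)
  have le: "fxx a s \<theta> \<le> g \<theta>" if th: "\<theta> \<in> {0..pi/2}" for \<theta>
  proof -
    have y: "a * sin \<theta> \<ge> 0" using a sin_nonneg_half[OF th] by simp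
    have "(3*((a * sin \<theta>)\<^sup>2 + t\<^sup>2)\<^sup>2 + ((a * sin \<theta>)\<^sup>2)\<^sup>2) / (2*((a * sin \<theta>)\<^sup>2 + t\<^sup>2) * sqrt ((a * sin \<theta>)\<^sup>2 + t\<^sup>2))
          \<le> 2*(a * sin \<theta>) + 3/2* t^3/(t\<^sup>2 + 3*(a * sin \<theta>)\<^sup>2)"
      by (rule pw1[OF y t(1)])
    then show ?thesis unfolding fxx_def g_def t(2) by (simp add: power_mult_distrib mult.assoc)
  qed
  have "integral {0..pi/2} (fxx a s) \<le> 2* a*1 + 3/2* t^3 * (pi / (2 * sqrt (s * (s + 3* a\<^sup>2))))"
    by (rule has_integral_le[OF fi gi le])
  also have "\<dots> = 2* a + 3* pi/4* s/sqrt (s + 3* a\<^sup>2)"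
  proof -
    have "sqrt (s * (s + 3* a\<^sup>2)) = t * sqrt (s + 3* a\<^sup>2)" by (simp add: t_def real_sqrt_mult)
    moreover have "sqrt (s + 3* a\<^sup>2) > 0" using s by (simp add: add_pos_nonneg)
    moreover have "t^3 = t * s" using t by (simp add: power3_eq_cube power2_eq_square)
    ultimately show ?thesis using t by (simp add: field_simps)
  qed
  also have "\<dots> < 1 + a\<^sup>2 + 2 * s" by (rule Q1[OF a s])
  finally show ?thesis .
qed

definition Iint :: "real \<Rightarrow> real \<Rightarrow> real" where
  "Iint a s = integral {0..pi/2} (\<lambda>\<theta>. (2 * a\<^sup>2 * (sin \<theta>)\<^sup>2 + s) / sqrt (a\<^sup>2 * (sin \<theta>)\<^sup>2 + s))"

definition FF :: "real \<Rightarrow> real \<Rightarrow> real" where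
  "FF a s = s * (a\<^sup>2 + s + 1 - Iint a s)"

lemma Iint_cont: "s > 0 \<Longrightarrow> continuous_on {0..pi/2} (\<lambda>\<theta>. (2 * a\<^sup>2 * (sin \<theta>)\<^sup>2 + s) / sqrt (a\<^sup>2 * (sin \<theta>)\<^sup>2 + s))"
proof -
  assume s: "s > 0"
  have nn: "\<And>t. 0 \<le> a\<^sup>2 * (sin t)\<^sup>2" by simp
  show ?thesis using s
    by (intro continuous_intros) (auto; smt (verit) nn)
qed

lemma FF_deriv:
  fixes a x :: real
  assumes x: "x > 0"
  shows "(FF a has_real_derivative (a\<^sup>2 + 1 + 2 * x - integral {0..pi/2} (fxx a x))) (at x)"
proof -
  define \<phi> where "\<phi> s \<theta> = s * ((2 * a\<^sup>2 * (sin \<theta>)\<^sup>2 + s) / sqrt (a\<^sup>2 * (sin \<theta>)\<^sup>2 + s))" for s \<theta>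
  have cb: "cbox 0 (pi/2) = {0..pi/2::real}" by (simp add: cbox_interval)
  have U: "open {(0::real)<..}" "convex {(0::real)<..}" by auto
  have fx: "((\<lambda>s. \<phi> s t) has_field_derivative fxx a s t) (at s within {0<..})"
    if "s \<in> {0<..}" "t \<in> cbox 0 (pi/2)" for s t
  proof -
    have D: "((\<lambda>s. s * ((2*(a\<^sup>2 * (sin t)\<^sup>2) + s) / sqrt (a\<^sup>2 * (sin t)\<^sup>2 + s))) has_real_derivative
           (3*(a\<^sup>2 * (sin t)\<^sup>2+s)\<^sup>2 + (a\<^sup>2 * (sin t)\<^sup>2)\<^sup>2) / (2*(a\<^sup>2 * (sin t)\<^sup>2+s) * sqrt (a\<^sup>2 * (sin t)\<^sup>2+s))) (at s)"
      by (rule deriv_phi) (use that in auto)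
    have E: "(\<lambda>s. \<phi> s t) = (\<lambda>s. s * ((2*(a\<^sup>2 * (sin t)\<^sup>2) + s) / sqrt (a\<^sup>2 * (sin t)\<^sup>2 + s)))"
      unfolding \<phi>_def by (simp add: mult.assoc)
    show ?thesis unfolding fxx_def E by (rule has_field_derivative_at_within[OF D])
  qed
  have int: "\<phi> s integrable_on cbox 0 (pi/2)" if "s \<in> {0<..}" for s
  proof -
    have nn: "\<And>t. 0 \<le> a\<^sup>2 * (sin t)\<^sup>2" by simp
    show ?thesis unfolding cb \<phi>_def using that
      by (intro integrable_continuous_interval continuous_intros) (auto; smt (verit) nn)
  qed
  have cont: "continuous_on ({0<..} \<times> cbox 0 (pi/2)) (\<lambda>(s, t). fxx a s t)"
  proof -
    have nn: "\<And>t. 0 \<le> a\<^sup>2 * (sin t)\<^sup>2" by simp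
    show ?thesis unfolding fxx_def split_def
      by (intro continuous_intros) (auto; smt (verit) nn)
  qed
  have L: "((\<lambda>s. integral (cbox 0 (pi/2)) (\<phi> s)) has_field_derivative integral (cbox 0 (pi/2)) (fxx a x)) (at x within {0<..})"
    by (rule leibniz_rule_field_derivative[OF fx int cont]) (use x U in auto)
  then have L': "((\<lambda>s. integral {0..pi/2} (\<phi> s)) has_field_derivative integral {0..pi/2} (fxx a x)) (at x)"
  proof -
    have "at x within {0<..} = at x" using x by (intro at_within_open) auto
    then show ?thesis using L unfolding cb by (simp only:)
  qed
  have P: "((\<lambda>s. s * (a\<^sup>2 + s + 1)) has_real_derivative (a\<^sup>2 + 1 + 2 * x)) (at x)"
    by (auto intro!: derivative_eq_intros)
  have "((\<lambda>s. s * (a\<^sup>2 + s + 1) - integral {0..pi/2} (\<phi> s)) has_real_derivative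
        (a\<^sup>2 + 1 + 2 * x - integral {0..pi/2} (fxx a x))) (at x)"
    by (rule DERIV_diff[OF P L'])
  then show ?thesis
  proof (rule has_field_derivative_transform_within_open[OF _ U(1)])
    show "x \<in> {0<..}" using x by simp
    fix s :: real assume s: "s \<in> {0<..}"
    have "integral {0..pi/2} (\<phi> s) = s * Iint a s"
      unfolding \<phi>_def Iint_def
      by (rule integral_mult[symmetric], rule integrable_continuous_interval, rule Iint_cont) (use s in auto)
    then show "s * (a\<^sup>2 + s + 1) - integral {0..pi/2} (\<phi> s) = FF a s"
      unfolding FF_def by (simp add: algebra_simps)
  qed
qed

lemma FF_mono:
  fixes a s1 s2 :: real
  assumes a: "0 < a" "a < 1" and s: "0 < s1" "s1 < s2"
  shows "FF a s1 < FF a s2"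
proof (rule DERIV_pos_imp_increasing[OF s(2)])
  fix x assume "s1 \<le> x" "x \<le> s2"
  then have x: "x > 0" using s by simp
  show "\<exists>y. DERIV (FF a) x :> y \<and> y > 0"
    using FF_deriv[OF x, of a] J_bound[OF a x] by auto
qed

lemma phi2_bound:
  fixes t :: real
  assumes t: "t > 0"
  shows "0 \<le> phi2 t" "phi2 t < 2 * sqrt (1 + t\<^sup>2)"
proof -
  have cont: "continuous_on {0..pi/2} (\<lambda>\<theta>. (2 * (sin \<theta>)\<^sup>2 + t\<^sup>2) / sqrt ((sin \<theta>)\<^sup>2 + t\<^sup>2))"
    using t by (intro continuous_intros) (auto simp: add_nonneg_pos)
  have fi: "((\<lambda>\<theta>. (2 * (sin \<theta>)\<^sup>2 + t\<^sup>2) / sqrt ((sin \<theta>)\<^sup>2 + t\<^sup>2)) has_integral phi2 t) {0..pi/2}"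
    unfolding phi2_def using cont by (intro integrable_integral integrable_continuous_interval)
  show "0 \<le> phi2 t"
    by (rule has_integral_nonneg[OF fi]) (use t in \<open>auto intro!: divide_nonneg_nonneg add_nonneg_nonneg\<close>)
  define g where "g \<theta> = 2 * sin \<theta> + t^3 * (1 / (t\<^sup>2 + 4 * (sin \<theta>)\<^sup>2))" for \<theta>
  have gi: "(g has_integral 2 * 1 + t^3 * (pi / (2 * sqrt (t\<^sup>2 * (t\<^sup>2 + 4))))) {0..pi/2}"
    unfolding g_def
    by (intro has_integral_add has_integral_mult_right int_sin int_rat) (use t in auto)
  have le: "(2 * (sin \<theta>)\<^sup>2 + t\<^sup>2) / sqrt ((sin \<theta>)\<^sup>2 + t\<^sup>2) \<le> g \<theta>" if th: "\<theta> \<in> {0..pi/2}" for \<theta>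
    using pw2[OF sin_nonneg_half[OF th] t] unfolding g_def by simp
  have "phi2 t \<le> 2 * 1 + t^3 * (pi / (2 * sqrt (t\<^sup>2 * (t\<^sup>2 + 4))))"
    by (rule has_integral_le[OF fi gi le])
  also have "\<dots> = 2 + pi/2 * t\<^sup>2 / sqrt (t\<^sup>2 + 4)"
  proof -
    have "sqrt (t\<^sup>2 * (t\<^sup>2 + 4)) = t * sqrt (t\<^sup>2 + 4)" using t by (simp add: real_sqrt_mult)
    moreover have "sqrt (t\<^sup>2 + 4) > 0" by (simp add: add_nonneg_pos)
    ultimately show ?thesis using t by (simp add: field_simps power2_eq_square power3_eq_cube)
  qed
  also have "\<dots> < 2 * sqrt (1 + t\<^sup>2)" by (rule Q2) (use t in simp)
  finally show "phi2 t < 2 * sqrt (1 + t\<^sup>2)" .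
qed

lemma C_pos:
  fixes t :: real
  assumes t: "t > 0"
  shows "1 - (phi2 t)\<^sup>2 / (4 * (1 + t\<^sup>2)) > 0"
proof -
  have "(phi2 t)\<^sup>2 < (2 * sqrt (1 + t\<^sup>2))\<^sup>2"
    using phi2_bound[OF t] by (intro power_strict_mono) auto
  also have "\<dots> = 4 * (1 + t\<^sup>2)" by (simp add: power_mult_distrib add_nonneg_nonneg)
  finally have "(phi2 t)\<^sup>2 < 4 * (1 + t\<^sup>2)" .
  moreover have "4 * (1 + t\<^sup>2) > 0" by (simp add: add_pos_nonneg)
  ultimately show ?thesis by (simp add: field_simps)
qed

lemma pl1:
  fixes \<sigma> s :: real
  assumes "\<sigma> \<ge> 0" "s > 0"
  shows "\<sigma> - s \<le> \<sigma>\<^sup>2 / sqrt (\<sigma>\<^sup>2 + s\<^sup>2)"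
proof (cases "\<sigma> = 0")
  case True then show ?thesis using assms by simp
next
  case False
  then have sp: "\<sigma> > 0" using assms by simp
  have A: "sqrt (\<sigma>\<^sup>2 + s\<^sup>2) \<le> \<sigma> + s"
  proof -
    have "\<sigma>\<^sup>2 + s\<^sup>2 \<le> (\<sigma> + s)\<^sup>2" using assms by (simp add: power2_eq_square algebra_simps)
    then have "sqrt (\<sigma>\<^sup>2 + s\<^sup>2) \<le> sqrt ((\<sigma> + s)\<^sup>2)" by (rule real_sqrt_le_mono)
    then show ?thesis using assms by simp
  qed
  have Ap: "sqrt (\<sigma>\<^sup>2 + s\<^sup>2) > 0" using sp by (simp add: add_pos_nonneg)
  have "\<sigma> - s \<le> \<sigma>\<^sup>2 / (\<sigma> + s)"
  proof -
    have "(\<sigma> - s) * (\<sigma> + s) \<le> \<sigma>\<^sup>2" by (simp add: power2_eq_square algebra_simps)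
    then show ?thesis using sp assms by (simp add: le_divide_eq)
  qed
  also have "\<dots> \<le> \<sigma>\<^sup>2 / sqrt (\<sigma>\<^sup>2 + s\<^sup>2)"
  proof -
    have "0 < (\<sigma> + s) * sqrt (\<sigma>\<^sup>2 + s\<^sup>2)" using sp assms Ap by simp
    then show ?thesis using A Ap by (intro divide_left_mono) auto
  qed
  finally show ?thesis .
qed

lemma pl2:
  fixes \<sigma> s :: real
  assumes "\<sigma> \<ge> 0" "\<sigma> \<le> 1" "s > 0"
  shows "\<sigma>\<^sup>2 / sqrt (\<sigma>\<^sup>2 + s\<^sup>2) \<le> 1 / s"
proof -
  have "s \<le> sqrt (\<sigma>\<^sup>2 + s\<^sup>2)" using assms by (metis real_sqrt_ge_abs1 add.commute abs_of_pos)
  moreover have "\<sigma>\<^sup>2 \<le> 1" using assms by (simp add: power_le_one)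
  ultimately show ?thesis using assms by (intro frac_le) auto
qed

lemma pl3:
  fixes \<sigma> s1 s2 :: real
  assumes sg: "\<sigma> \<ge> 0" "\<sigma> \<le> 1" and s: "0 < s1" "s1 < s2"
  shows "(s2\<^sup>2 - s1\<^sup>2) / (2 * (1 + s2\<^sup>2) * sqrt (1 + s2\<^sup>2)) * \<sigma>\<^sup>2
         \<le> \<sigma>\<^sup>2 / sqrt (\<sigma>\<^sup>2 + s1\<^sup>2) - \<sigma>\<^sup>2 / sqrt (\<sigma>\<^sup>2 + s2\<^sup>2)"
proof -
  define A where "A = sqrt (\<sigma>\<^sup>2 + s1\<^sup>2)"
  define B where "B = sqrt (\<sigma>\<^sup>2 + s2\<^sup>2)"
  define W where "W = sqrt (1 + s2\<^sup>2)"
  have Ap: "A > 0" using s unfolding A_def by (simp add: add_nonneg_pos)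
  have Bp: "B > 0" using s unfolding B_def by (simp add: add_nonneg_pos)
  have Wp: "W > 0" unfolding W_def by (simp add: add_pos_nonneg)
  have A2: "A\<^sup>2 = \<sigma>\<^sup>2 + s1\<^sup>2" unfolding A_def by simp
  have B2: "B\<^sup>2 = \<sigma>\<^sup>2 + s2\<^sup>2" unfolding B_def by simp
  have W2: "W\<^sup>2 = 1 + s2\<^sup>2" unfolding W_def by (simp add: add_nonneg_nonneg)
  have s12: "s1\<^sup>2 < s2\<^sup>2" using s by (intro power_strict_mono) auto
  have sg2: "\<sigma>\<^sup>2 \<le> 1" using sg by (simp add: power_le_one)
  have AW: "A \<le> W" unfolding A_def W_def using sg2 s12 by (intro real_sqrt_le_mono) auto
  have BW: "B \<le> W" unfolding B_def W_def using sg2 by (intro real_sqrt_le_mono) auto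
  have BA: "B - A = (s2\<^sup>2 - s1\<^sup>2) / (A + B)"
  proof -
    have "(B - A) * (A + B) = B\<^sup>2 - A\<^sup>2" by (simp add: power2_eq_square algebra_simps)
    then show ?thesis using Ap Bp A2 B2 by (simp add: eq_divide_eq)
  qed
  have BA': "(s2\<^sup>2 - s1\<^sup>2) / (2 * W) \<le> B - A"
    unfolding BA using s12 Ap Bp AW BW by (intro divide_left_mono) auto
  have AB: "A * B \<le> W * W" using AW BW Ap Bp by (intro mult_mono) auto
  have "\<sigma>\<^sup>2 / A - \<sigma>\<^sup>2 / B = \<sigma>\<^sup>2 * (B - A) / (A * B)" using Ap Bp by (simp add: field_simps)
  also have "\<dots> \<ge> \<sigma>\<^sup>2 * ((s2\<^sup>2 - s1\<^sup>2) / (2 * W)) / (W * W)"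
  proof (rule frac_le)
    have "0 \<le> (s2\<^sup>2 - s1\<^sup>2) / (2 * W)" using s12 Wp by simp
    then show "0 \<le> \<sigma>\<^sup>2 * (B - A)" using BA' by (intro mult_nonneg_nonneg) auto
    show "\<sigma>\<^sup>2 * ((s2\<^sup>2 - s1\<^sup>2) / (2 * W)) \<le> \<sigma>\<^sup>2 * (B - A)" using BA' by (intro mult_left_mono) auto
    show "0 < A * B" using Ap Bp by simp
    show "A * B \<le> W * W" by (rule AB)
  qed
  also have "\<sigma>\<^sup>2 * ((s2\<^sup>2 - s1\<^sup>2) / (2 * W)) / (W * W) = (s2\<^sup>2 - s1\<^sup>2) / (2 * (1 + s2\<^sup>2) * W) * \<sigma>\<^sup>2"
    using Wp W2 by (simp add: field_simps power2_eq_square)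
  finally show ?thesis unfolding A_def B_def W_def .
qed

lemma phi1_icont: "s > 0 \<Longrightarrow> continuous_on {0..pi/2} (\<lambda>\<theta>. (sin \<theta>)\<^sup>2 / sqrt ((sin \<theta>)\<^sup>2 + s\<^sup>2))"
  by (intro continuous_intros) (auto simp: add_nonneg_pos)

lemma phi1_has: "s > 0 \<Longrightarrow> ((\<lambda>\<theta>. (sin \<theta>)\<^sup>2 / sqrt ((sin \<theta>)\<^sup>2 + s\<^sup>2)) has_integral phi1 s) {0..pi/2}"
  unfolding phi1_def by (intro integrable_integral integrable_continuous_interval phi1_icont)

lemma phi1_0: "phi1 0 = 1"
proof -
  have "((\<lambda>\<theta>. (sin \<theta>)\<^sup>2 / sqrt ((sin \<theta>)\<^sup>2 + 0\<^sup>2)) has_integral 1) {0..pi/2}"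
  proof (rule has_integral_eq[OF _ int_sin])
    fix x :: real assume x: "x \<in> {0..pi/2}"
    have "sin x \<ge> 0" by (rule sin_nonneg_half[OF x])
    then show "sin x = (sin x)\<^sup>2 / sqrt ((sin x)\<^sup>2 + 0\<^sup>2)"
      by (cases "sin x = 0") (auto simp: power2_eq_square)
  qed
  then show ?thesis unfolding phi1_def by (rule integral_unique)
qed

lemma phi1_low: "s > 0 \<Longrightarrow> 1 - pi/2 * s \<le> phi1 s"
proof -
  assume s: "s > 0"
  have ci: "((\<lambda>\<theta>. s) has_integral (pi/2) * s) {0..pi/2}"
    using has_integral_const_real[of s 0 "pi/2"] pi_gt3 by simp
  have gi: "((\<lambda>\<theta>. sin \<theta> - s) has_integral 1 - (pi/2) * s) {0..pi/2}"
    by (intro has_integral_diff int_sin ci)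
  have "1 - (pi/2) * s \<le> phi1 s"
    by (rule has_integral_le[OF gi phi1_has[OF s]]) (use s sin_nonneg_half in \<open>auto intro!: pl1\<close>)
  then show ?thesis using pi_gt3 by simp
qed

lemma phi1_up: "s > 0 \<Longrightarrow> phi1 s \<le> pi/2 / s"
proof -
  assume s: "s > 0"
  have ci: "((\<lambda>\<theta>. 1/s) has_integral (pi/2) * (1/s)) {0..pi/2}"
    using has_integral_const_real[of "1/s" 0 "pi/2"] pi_gt3 by simp
  have "phi1 s \<le> (pi/2) * (1/s)"
    by (rule has_integral_le[OF phi1_has[OF s] ci])
       (use s sin_nonneg_half in \<open>auto intro!: pl2 simp: sin_le_one\<close>)
  then show ?thesis using pi_gt3 by simp
qed

lemma phi1_dec:
  assumes s: "0 < s1" "s1 < s2"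
  shows "phi1 s2 < phi1 s1"
proof -
  define c where "c = (s2\<^sup>2 - s1\<^sup>2) / (2 * (1 + s2\<^sup>2) * sqrt (1 + s2\<^sup>2))"
  have s12: "s1\<^sup>2 < s2\<^sup>2" using s by (intro power_strict_mono) auto
  have cpos: "c > 0" unfolding c_def using s12 by (simp add: add_pos_nonneg)
  have di: "((\<lambda>\<theta>. (sin \<theta>)\<^sup>2 / sqrt ((sin \<theta>)\<^sup>2 + s1\<^sup>2) - (sin \<theta>)\<^sup>2 / sqrt ((sin \<theta>)\<^sup>2 + s2\<^sup>2)) has_integral phi1 s1 - phi1 s2) {0..pi/2}"
    using s by (intro has_integral_diff phi1_has) auto
  have ci: "((\<lambda>\<theta>. c * (sin \<theta>)\<^sup>2) has_integral c * (pi/4)) {0..pi/2}"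
    by (intro has_integral_mult_right int_sin2)
  have "c * (pi/4) \<le> phi1 s1 - phi1 s2"
    by (rule has_integral_le[OF ci di]) (use s sin_nonneg_half in \<open>auto intro!: pl3[of _ s1 s2, unfolded c_def[symmetric]] simp: sin_le_one\<close>)
  moreover have "c * (pi/4) > 0" using cpos by simp
  ultimately show ?thesis by simp
qed

lemma deriv_q:
  fixes \<sigma> s :: real
  assumes s: "s > 0"
  shows "((\<lambda>s. \<sigma>\<^sup>2 / sqrt (\<sigma>\<^sup>2 + s\<^sup>2)) has_real_derivative - (\<sigma>\<^sup>2 * s) / ((\<sigma>\<^sup>2 + s\<^sup>2) * sqrt (\<sigma>\<^sup>2 + s\<^sup>2))) (at s)"
proof -
  have p: "\<sigma>\<^sup>2 + s\<^sup>2 > 0" using s by (simp add: add_nonneg_pos)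
  show ?thesis
    using p apply (auto intro!: derivative_eq_intros)
    using p by (simp add: field_simps)
qed

lemma phi1_isCont:
  assumes x: "x > 0"
  shows "isCont phi1 x"
proof -
  define f where "f s \<theta> = (sin \<theta>)\<^sup>2 / sqrt ((sin \<theta>)\<^sup>2 + s\<^sup>2)" for s \<theta> :: real
  define fx where "fx s \<theta> = - ((sin \<theta>)\<^sup>2 * s) / (((sin \<theta>)\<^sup>2 + s\<^sup>2) * sqrt ((sin \<theta>)\<^sup>2 + s\<^sup>2))" for s \<theta> :: real
  have cb: "cbox 0 (pi/2) = {0..pi/2::real}" by (simp add: cbox_interval)
  have U: "open {(0::real)<..}" "convex {(0::real)<..}" by auto
  have d: "((\<lambda>s. f s t) has_field_derivative fx s t) (at s within {0<..})"
    if "s \<in> {0<..}" "t \<in> cbox 0 (pi/2)" for s t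
  proof -
    have "s > 0" using that by simp
    from deriv_q[OF this, of "sin t"] show ?thesis
      unfolding f_def fx_def by (rule has_field_derivative_at_within)
  qed
  have int: "f s integrable_on cbox 0 (pi/2)" if "s \<in> {0<..}" for s
    unfolding cb f_def using that by (intro integrable_continuous_interval phi1_icont) auto
  have cont: "continuous_on ({0<..} \<times> cbox 0 (pi/2)) (\<lambda>(s, t). fx s t)"
  proof -
    have nn: "\<And>t::real. 0 \<le> (sin t)\<^sup>2" by simp
    show ?thesis unfolding fx_def split_def
      by (intro continuous_intros) (auto; smt (verit) nn zero_less_power2)
  qed
  have L: "((\<lambda>s. integral (cbox 0 (pi/2)) (f s)) has_field_derivative integral (cbox 0 (pi/2)) (fx x)) (at x within {0<..})"
    by (rule leibniz_rule_field_derivative[OF d int cont]) (use x U in auto)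
  have "at x within {0<..} = at x" using x by (intro at_within_open) auto
  then have "((\<lambda>s. integral (cbox 0 (pi/2)) (f s)) has_field_derivative integral (cbox 0 (pi/2)) (fx x)) (at x)"
    using L by (simp only:)
  moreover have "(\<lambda>s. integral (cbox 0 (pi/2)) (f s)) = phi1"
    by (rule ext) (simp add: cb f_def[abs_def] phi1_def)
  ultimately show ?thesis by (metis DERIV_isCont)
qed

lemma phi1_inv_pos:
  fixes a :: real
  assumes a: "0 < a" "a < 1"
  shows "phi1_inv a > 0"
proof -
  define e where "e = (1 - a) / 2"
  define M where "M = 2 / a"
  have e: "e > 0" using a by (simp add: e_def)
  have "e < 1" unfolding e_def using a by simp
  moreover have "M > 2" unfolding M_def using a by (simp add: field_simps)
  ultimately have eM: "e \<le> M" by linarith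
  have M: "M > 0" using a by (simp add: M_def)
  have "a < 1 - pi/2 * e"
  proof -
    have "(1 - a) * (1 - pi/4) > 0" using a pi_less_4 by (intro mult_pos_pos) auto
    then show ?thesis unfolding e_def by (simp add: algebra_simps)
  qed
  also have "\<dots> \<le> phi1 e" by (rule phi1_low[OF e])
  finally have ge: "a \<le> phi1 e" by simp
  have "phi1 M \<le> pi/2 / M" by (rule phi1_up[OF M])
  also have "\<dots> = pi/4 * a" using a by (simp add: M_def)
  also have "\<dots> \<le> a" using a pi_less_4 by simp
  finally have le: "phi1 M \<le> a" .
  have cont: "continuous_on {e..M} phi1"
    using e by (intro continuous_at_imp_continuous_on ballI phi1_isCont) auto
  obtain x where x: "e \<le> x" "x \<le> M" "phi1 x = a"
    using IVT2'[of phi1 M a e, OF le ge eM cont] by blast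
  have ex: "\<exists>!s. 0 \<le> s \<and> phi1 s = a"
  proof (rule ex1I[of _ x])
    show "0 \<le> x \<and> phi1 x = a" using x e by simp
    fix y assume y: "0 \<le> y \<and> phi1 y = a"
    have "y \<noteq> 0" using y a phi1_0 by auto
    then have yp: "y > 0" using y by simp
    show "y = x"
    proof (rule ccontr)
      assume "y \<noteq> x"
      then consider "y < x" | "x < y" by linarith
      then show False
        using phi1_dec[OF yp] phi1_dec[of x y] x y e by (cases; force)
    qed
  qed
  have "0 \<le> phi1_inv a \<and> phi1 (phi1_inv a) = a"
    unfolding phi1_inv_def by (rule theI'[OF ex])
  moreover have "phi1_inv a \<noteq> 0" using calculation a phi1_0 by auto
  ultimately show ?thesis by simp
qed

theorem mainTheorem17:
  fixes a :: real
  assumes "0 < a" and "a < 1"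
  shows "\<forall>d1 d2. 0 < d1 \<longrightarrow> d1 < d2 \<longrightarrow> psi2 a (L a d2) d2 < psi2 a (L a d1) d1"
proof (intro allI impI)
  fix d1 d2 :: real
  assume d: "0 < d1" "d1 < d2"
  define t where "t = phi1_inv a"
  define C where "C = 1 - (phi2 t)\<^sup>2 / (4 * (1 + t\<^sup>2))"
  have t: "t > 0" unfolding t_def using assms by (rule phi1_inv_pos)
  have C: "C > 0" unfolding C_def by (rule C_pos[OF t])
  have Ld: "L a d = 4 / d * C" for d unfolding L_def C_def t_def by simp
  have key: "psi2 a (L a d) d = FF a (4 / d * C) / C" if "d > 0" for d
  proof -
    have "psi2 a (L a d) d = 4 / d * (a\<^sup>2 + 4 / d * C + 1 - Iint a (4 / d * C))"
      unfolding psi2_def Iint_def Ld by simp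
    also have "\<dots> = FF a (4 / d * C) / C" unfolding FF_def using C by simp
    finally show ?thesis .
  qed
  have s: "0 < 4 / d2 * C" "4 / d2 * C < 4 / d1 * C"
    using d C by (auto intro!: mult_strict_right_mono divide_strict_left_mono)
  have "FF a (4 / d2 * C) < FF a (4 / d1 * C)"
    by (rule FF_mono[OF assms s])
  then have "FF a (4 / d2 * C) / C < FF a (4 / d1 * C) / C"
    using C by (simp add: divide_strict_right_mono)
  then show "psi2 a (L a d2) d2 < psi2 a (L a d1) d1"
    using key d by simp
qed

end
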